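(* Let $a<b$ be real numbers and let $h,g:[a,b)\to\mathbb{R}$ be continuous functions such that $h$ is increasing and is not constant on any neighborhood of $a$. For $x\in(a,b)$ let $\mu(x)$ be the supremum of the set of numbers $\tau\in(a,x]$ that are points of local extremum of the function $$t\mapsto \bigl(g(x)-g(a)\bigr)h(t)-\bigl(h(x)-h(a)\bigr)g(t),\qquad t\in[a,b).$$ Suppose that the limit $\lim_{x\to a}\frac{g(x)-g(a)}{h(x)-h(a)}$ exists and is finite. Then $$\varlimsup_{x\to a}\frac{h(\mu(x))-h(a)}{h(x)-h(a)}\ \geq\ \frac1e.$$
   Context: Limits at $a$ are right-hand limits. *)

theory Defs
  imports Complex_Main "HOL-Library.Extended_Real" "HOL-Library.Liminf_Limsup"
begin

definition local_extremum_on :: "real set \<Rightarrow> (real \<Rightarrow> real) \<Rightarrow> real \<Rightarrow> bool" where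
  "local_extremum_on S f \<tau> \<longleftrightarrow> \<tau> \<in> S \<and>
     (\<exists>\<delta>>0. (\<forall>t\<in>S. \<bar>t - \<tau>\<bar> < \<delta> \<longrightarrow> f t \<le> f \<tau>) \<or>
             (\<forall>t\<in>S. \<bar>t - \<tau>\<bar> < \<delta> \<longrightarrow> f \<tau> \<le> f t))"

definition mu :: "real \<Rightarrow> real \<Rightarrow> (real \<Rightarrow> real) \<Rightarrow> (real \<Rightarrow> real) \<Rightarrow> real \<Rightarrow> real" where
  "mu a b h g x = Sup {\<tau> \<in> {a<..x}.
      local_extremum_on {a..<b} (\<lambda>t. (g x - g a) * h t - (h x - h a) * g t) \<tau>}"

end

theory Submission
  imports Defs "HOL-Analysis.Analysis"
begin

lemma seq_contra:
  fixes u :: "nat \<Rightarrow> real" and \<theta> :: real and m :: nat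
  assumes m1: "m \<ge> 1" and th: "0 < \<theta>" "\<theta> < 1" and c1: "real m * (1 - \<theta>) > 1"
    and dec: "\<And>k. u (Suc k) \<le> u k" and pos: "\<And>k. u k > 0"
    and small: "\<And>\<epsilon>. \<epsilon> > 0 \<Longrightarrow> \<exists>n. u n < \<epsilon>"
    and step: "\<And>n. u (n+m-1) - u (n+m) \<ge> (1-\<theta>) * (u n - u (n+m))"
  shows False
proof -
  define S where "S n = (\<Sum>i<m. u (n+i))" for n
  have decs: "decseq u" using dec by (simp add: decseq_SucI)
  have Sstep: "S n - S (Suc n) = u n - u (n+m)" for n
  proof -
    have "S n + u (n+m) = (\<Sum>i<Suc m. u (n+i))" by (simp add: S_def)
    also have "\<dots> = u n + S (Suc n)" unfolding S_def
      by (subst sum.lessThan_Suc_shift) simp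
    finally show ?thesis by simp
  qed
  have claim: "u (m-1) - u (n+m-1) \<ge> (1-\<theta>) * (S 0 - S n)" for n
  proof (induction n)
    case 0 then show ?case by simp
  next
    case (Suc n)
    have e: "Suc n + m - 1 = n + m" using m1 by simp
    have "(1-\<theta>) * (S 0 - S (Suc n)) = (1-\<theta>) * (S 0 - S n) + (1-\<theta>) * (u n - u (n+m))"
    proof -
      have "S 0 - S (Suc n) = (S 0 - S n) + (u n - u (n+m))" using Sstep[of n] by linarith
      then show ?thesis by (metis distrib_left)
    qed
    also have "\<dots> \<le> (u (m-1) - u (n+m-1)) + (u (n+m-1) - u (n+m))"
      using Suc.IH step[of n] by linarith
    finally show ?case using e by simp
  qed
  have S0: "S 0 \<ge> real m * u (m-1)"
  proof -
    have "(\<Sum>i<m. u (m-1)) \<le> (\<Sum>i<m. u (0+i))"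
      by (rule sum_mono) (use decs in \<open>auto intro: decseqD\<close>)
    then show ?thesis by (simp add: S_def)
  qed
  have Sn: "S n \<le> real m * u n" for n
  proof -
    have "(\<Sum>i<m. u (n+i)) \<le> (\<Sum>i<m. u n)"
      by (rule sum_mono) (use decs in \<open>auto intro: decseqD\<close>)
    then show ?thesis by (simp add: S_def)
  qed
  define c where "c = real m * (1 - \<theta>)"
  have cpos: "c > 1" using c1 c_def by simp
  have "(c - 1) * u (m-1) / c > 0" using cpos pos[of "m-1"] by simp
  then obtain n where n: "u n < (c - 1) * u (m-1) / c" using small by blast
  have key: "u (m-1) - u (n+m-1) \<ge> (1-\<theta>) * (real m * u (m-1) - real m * u n)"
  proof -
    have "(1-\<theta>) * (real m * u (m-1) - real m * u n) \<le> (1-\<theta>) * (S 0 - S n)"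
      using S0 Sn[of n] th by (intro mult_left_mono) auto
    then show ?thesis using claim[of n] by linarith
  qed
  have "c * u n < (c-1) * u (m-1)" using n cpos by (simp add: field_simps)
  moreover have "u (m-1) - u (n+m-1) \<ge> c * u (m-1) - c * u n"
    using key by (simp add: c_def algebra_simps)
  moreover have "u (n+m-1) > 0" by (rule pos)
  ultimately show False by (simp add: algebra_simps)
qed

lemma quant:
  fixes H v :: "real \<Rightarrow> real" and a T q :: real
  assumes aT: "a < T" and Hc: "continuous_on {a..T} H" and Ha: "H a = 0"
    and Hm: "mono_on {a..T} H" and Hp: "\<And>t. a < t \<Longrightarrow> t \<le> T \<Longrightarrow> H t > 0"
    and vm: "\<And>s t. a < s \<Longrightarrow> s < t \<Longrightarrow> t \<le> T \<Longrightarrow> v s < v t"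
    and v0: "(v \<longlongrightarrow> 0) (at_right a)"
    and q: "0 < q" "q < exp (-1)"
    and P: "\<And>x s t. a < s \<Longrightarrow> s \<le> t \<Longrightarrow> t \<le> x \<Longrightarrow> x \<le> T \<Longrightarrow> q * H x \<le> H s \<Longrightarrow>
              H t * (v x - v t) \<le> H s * (v x - v s)"
  shows False
proof -
  define \<beta> where "\<beta> = (1 - ln q) / 2"
  have lnq: "ln q < -1" using q by (metis ln_exp ln_less_cancel_iff exp_gt_zero)
  have b1: "\<beta> > 1" and b2: "exp (-\<beta>) > q"
  proof -
    show "\<beta> > 1" using lnq by (simp add: \<beta>_def)
    have "-\<beta> > ln q" using lnq unfolding \<beta>_def by (simp add: field_simps)
    then have "exp (-\<beta>) > exp (ln q)" by simp
    then show "exp (-\<beta>) > q" using q by simp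
  qed
  have "eventually (\<lambda>n. (1 + (-\<beta>) / real n) ^ n > q) sequentially"
    using tendsto_exp_limit_sequentially[of "-\<beta>"] b2 by (rule order_tendstoD)
  moreover have "eventually (\<lambda>n. real n > \<beta>) sequentially"
    by (rule eventually_sequentiallyI[of "nat \<lceil>\<beta>\<rceil> + 1"]) linarith
  ultimately have "eventually (\<lambda>n. (1 + (-\<beta>) / real n) ^ n > q \<and> real n > \<beta>) sequentially"
    by (rule eventually_conj)
  then obtain N where "\<And>n. n \<ge> N \<Longrightarrow> (1 + (-\<beta>) / real n) ^ n > q \<and> real n > \<beta>"
    unfolding eventually_sequentially by blast
  then have m: "(1 + (-\<beta>) / real N) ^ N > q" "real N > \<beta>" by auto
  define m where "m = N"
  note m = m[folded m_def]
  define \<theta> where "\<theta> = 1 - \<beta> / real m"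
  have m1: "m \<ge> 1" using m(2) b1 by (cases m) auto
  have mpos: "real m > 0" using m1 by simp
  have th0: "0 < \<theta>" using m mpos by (simp add: \<theta>_def field_simps)
  have th1: "\<theta> < 1" using b1 mpos by (simp add: \<theta>_def)
  have thpow: "\<theta> ^ m > q" using m(1) by (simp add: \<theta>_def)
  have cm: "real m * (1 - \<theta>) > 1" using b1 mpos by (simp add: \<theta>_def)
  have HT: "H T > 0" using Hp aT by simp
  have ex: "\<exists>y. a \<le> y \<and> y \<le> T \<and> H y = \<theta> ^ k * H T" for k
  proof -
    have "\<theta> ^ k \<le> 1" using th0 th1 by (simp add: power_le_one)
    then have "\<theta> ^ k * H T \<le> H T" using HT by (simp add: mult_le_cancel_right1)
    moreover have "H a \<le> \<theta> ^ k * H T" using Ha th0 HT by simp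
    ultimately show ?thesis using IVT'[OF _ _ _ Hc] aT by auto
  qed
  define y where "y k = (SOME y. a \<le> y \<and> y \<le> T \<and> H y = \<theta> ^ k * H T)" for k
  have y: "a \<le> y k" "y k \<le> T" "H (y k) = \<theta> ^ k * H T" for k
    using someI_ex[OF ex[of k]] unfolding y_def by blast+
  have ya: "a < y k" for k
  proof -
    have "H (y k) > 0" using y(3)[of k] th0 HT by simp
    then show ?thesis using y(1)[of k] Ha by (cases "y k = a") auto
  qed
  have Hmono: "a \<le> s \<Longrightarrow> s \<le> t \<Longrightarrow> t \<le> T \<Longrightarrow> H s \<le> H t" for s t
    using Hm by (auto intro: mono_onD)
  have ydec: "y (Suc k) < y k" for k
  proof (rule ccontr)
    assume "\<not> y (Suc k) < y k"
    then have "y k \<le> y (Suc k)" by simp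
    then have "H (y k) \<le> H (y (Suc k))" using Hmono y(1,2) by blast
    moreover have "\<theta> ^ Suc k * H T < \<theta> ^ k * H T" using th0 th1 HT by simp
    ultimately show False using y(3)[of k] y(3)[of "Suc k"] by linarith
  qed
  have ydecs: "decseq y" using ydec by (simp add: decseq_SucI less_imp_le)
  define u where "u k = v (y k)" for k
  have udec: "u (Suc k) \<le> u k" for k
    unfolding u_def using vm[OF ya ydec y(2)] less_imp_le by blast
  have vpos: "v t > 0" if "a < t" "t \<le> T" for t
  proof (rule ccontr)
    assume "\<not> v t > 0"
    define z where "z = (a + t) / 2"
    have z: "a < z" "z < t" using that by (auto simp: z_def)
    have "v z < 0" using vm[OF z that(2)] \<open>\<not> v t > 0\<close> by simp
    then have "eventually (\<lambda>w. v w > v z) (at_right a)"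
      using order_tendstoD(1)[OF v0] by blast
    then obtain b' where b': "b' > a" "\<And>w. w > a \<Longrightarrow> w < b' \<Longrightarrow> v w > v z"
      unfolding eventually_at_right_field by blast
    define w where "w = (a + min b' z) / 2"
    have "a < w" "w < b'" "w < z" using b' z by (auto simp: w_def)
    then have "v w > v z" "v w < v z" using b' vm[OF \<open>a < w\<close> \<open>w < z\<close>] z that by auto
    then show False by simp
  qed
  have upos: "u k > 0" for k unfolding u_def using vpos ya y(2) by blast
  have small: "\<exists>n. u n < \<epsilon>" if "\<epsilon> > 0" for \<epsilon>
  proof -
    have "eventually (\<lambda>w. v w < \<epsilon>) (at_right a)" using order_tendstoD(2)[OF v0 that] by blast
    then obtain b' where b': "b' > a" "\<And>w. w > a \<Longrightarrow> w < b' \<Longrightarrow> v w < \<epsilon>"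
      unfolding eventually_at_right_field by blast
    define z where "z = (a + min b' T) / 2"
    have z: "a < z" "z < b'" "z \<le> T" using b' aT by (auto simp: z_def)
    have "H z / H T > 0" using Hp[OF z(1) z(3)] HT by simp
    then obtain n where n: "\<theta> ^ n < H z / H T" using real_arch_pow_inv th1 by blast
    have "H (y n) < H z" using n y(3)[of n] HT by (simp add: field_simps)
    then have "y n < z" using Hmono[of z "y n"] z y(2)[of n] by force
    then have "v (y n) < \<epsilon>" using b'(2)[OF ya, of n] z by linarith
    then show ?thesis unfolding u_def by blast
  qed
  have step: "u (n+m-1) - u (n+m) \<ge> (1-\<theta>) * (u n - u (n+m))" for n
  proof -
    define x s t where "x = y n" and "s = y (n+m)" and "t = y (n+m-1)"
    have e: "n + m = Suc (n + m - 1)" using m1 by simp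
    have st: "s \<le> t" unfolding s_def t_def using ydec[of "n+m-1"] e by simp
    have tx: "t \<le> x" unfolding t_def x_def using ydecs by (rule decseqD) (use m1 in simp)
    have Hst: "H s = \<theta> * H t" unfolding s_def t_def using y(3) e
      by (metis mult.assoc power_Suc)
    have Hsx: "H s = \<theta> ^ m * H x" unfolding s_def x_def using y(3)
      by (simp add: power_add mult_ac)
    have Hx: "H x > 0" unfolding x_def using Hp ya y(2) by blast
    have Ht: "H t > 0" unfolding t_def using Hp ya y(2) by blast
    have "q * H x \<le> H s" using Hsx thpow Hx by simp
    from P[OF _ st tx _ this] have "H t * (v x - v t) \<le> H s * (v x - v s)"
      unfolding s_def x_def using ya y(2) by blast
    then have "H t * ((v x - v t) - \<theta> * (v x - v s)) \<le> 0"
      unfolding Hst by (simp add: algebra_simps)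
    then have "(v x - v t) - \<theta> * (v x - v s) \<le> 0" using Ht
      by (simp add: mult_le_0_iff)
    then show ?thesis unfolding u_def x_def s_def t_def[symmetric]
      by (simp add: algebra_simps)
  qed
  show False using seq_contra[OF m1 th0 th1 cm udec upos small step] .
qed

lemma noext_inj:
  fixes f :: "real \<Rightarrow> real"
  assumes "a \<le> p" "r < b" "continuous_on {p..r} f"
    and noext: "\<And>\<tau>. p < \<tau> \<Longrightarrow> \<tau> < r \<Longrightarrow> \<not> local_extremum_on {a..<b} f \<tau>"
  shows "inj_on f {p..r}"
proof -
  have main: False if st: "p \<le> s" "s < t" "t \<le> r" and eq: "f s = f t" for s t
  proof -
    have helper: False if c: "s < c" "c < t" and ext: "(\<forall>y\<in>{s..t}. f y \<le> f c) \<or> (\<forall>y\<in>{s..t}. f c \<le> f y)" for c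
    proof -
      have "local_extremum_on {a..<b} f c"
        unfolding local_extremum_on_def
      proof (intro conjI exI[of _ "min (c - s) (t - c)"])
        show "c \<in> {a..<b}" using c st assms by auto
        show "min (c - s) (t - c) > 0" using c by simp
        show "(\<forall>y\<in>{a..<b}. \<bar>y - c\<bar> < min (c - s) (t - c) \<longrightarrow> f y \<le> f c) \<or>
              (\<forall>y\<in>{a..<b}. \<bar>y - c\<bar> < min (c - s) (t - c) \<longrightarrow> f c \<le> f y)"
        proof -
          have "y \<in> {s..t}" if "\<bar>y - c\<bar> < min (c - s) (t - c)" for y using that by auto
          then show ?thesis using ext by blast
        qed
      qed
      moreover have "p < c" "c < r" using c st by auto
      ultimately show False using noext by blast
    qed
    have cont: "continuous_on {s..t} f" using assms(3) by (rule continuous_on_subset) (use st in auto)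
    obtain c1 where c1: "c1 \<in> {s..t}" "\<forall>y\<in>{s..t}. f y \<le> f c1"
      using continuous_attains_sup[OF compact_Icc _ cont] st by auto
    obtain c2 where c2: "c2 \<in> {s..t}" "\<forall>y\<in>{s..t}. f c2 \<le> f y"
      using continuous_attains_inf[OF compact_Icc _ cont] st by auto
    show False
    proof (cases "c1 = s \<or> c1 = t")
      case False
      then show ?thesis using helper[of c1] c1 by auto
    next
      case T1: True
      show ?thesis
      proof (cases "c2 = s \<or> c2 = t")
        case False
        then show ?thesis using helper[of c2] c2 by auto
      next
        case True
        have "f c1 = f s" "f c2 = f s" using T1 True eq by auto
        then have all: "\<forall>y\<in>{s..t}. f y = f s" using c1 c2 by force
        have mid: "s < (s+t)/2" "(s+t)/2 < t" using st by auto
        then have "(s+t)/2 \<in> {s..t}" by simp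
        then have "f ((s+t)/2) = f s" using all by blast
        then have "\<forall>y\<in>{s..t}. f y \<le> f ((s+t)/2)"
        proof (intro ballI)
          fix y assume "y \<in> {s..t}"
          then have "f y = f s" using all by blast
          then show "f y \<le> f ((s+t)/2)" using \<open>f ((s+t)/2) = f s\<close> by linarith
        qed
        then show ?thesis using helper[OF mid] by blast
      qed
    qed
  qed
  show ?thesis
  proof (rule inj_onI)
    fix s t assume "s \<in> {p..r}" "t \<in> {p..r}" "f s = f t"
    then show "s = t" using main[of s t] main[of t s] by (cases s t rule: linorder_cases) auto
  qed
qed

lemma window_mono:
  fixes Q :: "real \<Rightarrow> real"
  assumes "continuous_on {m..x} Q" "inj_on Q {m..x}" "Q x = 0"
    and pos: "\<And>t. m \<le> t \<Longrightarrow> t < x \<Longrightarrow> Q t > 0"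
    and st: "m \<le> s" "s \<le> t" "t \<le> x"
  shows "Q t \<le> Q s"
proof (rule ccontr)
  assume "\<not> Q t \<le> Q s"
  then have lt: "Q s < Q t" by simp
  then have "s \<noteq> t" by auto
  show False
  proof (cases "t = x")
    case True
    then show ?thesis using lt pos[of s] st assms(3) \<open>s \<noteq> t\<close> by auto
  next
    case False
    then have tx: "t < x" using st by simp
    have "Q x \<le> Q s" using pos[of s] st assms(3) \<open>s \<noteq> t\<close> by auto
    then obtain z where z: "t \<le> z" "z \<le> x" "Q z = Q s"
      using IVT2'[of Q x "Q s" t] lt tx continuous_on_subset[OF assms(1)] st by fastforce
    have "z = s" using inj_onD[OF assms(2) z(3)] z st by auto
    then show False using z st \<open>s \<noteq> t\<close> by auto
  qed
qed

lemma sign_const: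
  fixes Q :: "real \<Rightarrow> real"
  assumes "m \<le> x" "continuous_on {m..x} Q" "inj_on Q {m..x}" "Q x = 0"
  shows "(\<forall>t. m \<le> t \<longrightarrow> t < x \<longrightarrow> Q t > 0) \<or> (\<forall>t. m \<le> t \<longrightarrow> t < x \<longrightarrow> Q t < 0)"
proof (rule ccontr)
  have nz: "Q t \<noteq> 0" if "m \<le> t" "t < x" for t
    using inj_onD[OF assms(3), of t x] that assms(4) by auto
  assume "\<not> ?thesis"
  then obtain t1 t2 where t1: "m \<le> t1" "t1 < x" "Q t1 \<le> 0" and t2: "m \<le> t2" "t2 < x" "Q t2 \<ge> 0"
    by (meson not_less)
  have Q1: "Q t1 < 0" using nz t1 by force
  have Q2: "Q t2 > 0" using nz t2 by force
  have "\<exists>z. min t1 t2 \<le> z \<and> z \<le> max t1 t2 \<and> Q z = 0"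
  proof (cases "t1 \<le> t2")
    case True
    then show ?thesis using IVT'[of Q t1 0 t2] Q1 Q2 continuous_on_subset[OF assms(2)] t1 t2 by fastforce
  next
    case False
    then show ?thesis using IVT2'[of Q t1 0 t2] Q1 Q2 continuous_on_subset[OF assms(2)] t1 t2 by fastforce
  qed
  then obtain z where "min t1 t2 \<le> z" "z \<le> max t1 t2" "Q z = 0" by blast
  then show False using nz[of z] t1 t2 by auto
qed

lemma nomax:
  fixes w H mu :: "real \<Rightarrow> real" and a c0 q s c t :: real
  assumes q: "0 < q" "q < 1"
    and Hc: "continuous_on {a<..c0} H" and Hm: "mono_on {a<..c0} H"
    and Hp: "\<And>t. a < t \<Longrightarrow> t \<le> c0 \<Longrightarrow> H t > 0"
    and wc: "continuous_on {a<..c0} w"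
    and mu: "\<And>x. a < x \<Longrightarrow> x \<le> c0 \<Longrightarrow> a < mu x \<and> mu x < x \<and> H (mu x) < q * H x"
    and typw: "\<And>x. a < x \<Longrightarrow> x \<le> c0 \<Longrightarrow>
       (\<forall>t. mu x \<le> t \<longrightarrow> t < x \<longrightarrow> w t < w x) \<or> (\<forall>t. mu x \<le> t \<longrightarrow> t < x \<longrightarrow> w x < w t)"
    and sct: "a < s" "s < c" "c < t" "t \<le> c0"
    and mx: "\<forall>y\<in>{s..t}. w y \<le> w c"
  shows False
proof -
  have cin: "c \<in> {a<..c0}" using sct by auto
  have Hc0: "H c > 0" using Hp sct by simp
  define e where "e = (1 - q) * H c / 4"
  have e0: "e > 0" using q Hc0 by (simp add: e_def)
  obtain d where d: "d > 0" "\<And>y. y \<in> {a<..c0} \<Longrightarrow> dist y c < d \<Longrightarrow> dist (H y) (H c) < e"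
    using Hc cin e0 unfolding continuous_on_iff by metis
  define c' where "c' = max ((s + c) / 2) (c - d / 2)"
  have aux: "s < (s+c)/2" "(s+c)/2 < c" "c - d/2 < c" using sct d by auto
  have c': "s < c'" "c' < c" unfolding c'_def using aux
    by (auto simp: less_max_iff_disj)
  have "dist (H c') (H c) < e" using d c' sct by (intro d(2)) (auto simp: dist_real_def c'_def)
  then have Hc': "H c' > H c - e" by (simp add: dist_real_def abs_less_iff)
  have ineq: "q * (H c + e) < H c - e"
  proof -
    have "(1 + q) * e < 4 * e" using q e0 by simp
    also have "4 * e = (1 - q) * H c" by (simp add: e_def)
    finally show ?thesis by (simp add: algebra_simps)
  qed
  have Hmono: "a < y1 \<Longrightarrow> y1 \<le> y2 \<Longrightarrow> y2 \<le> c0 \<Longrightarrow> H y1 \<le> H y2" for y1 y2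
    using Hm by (auto intro: mono_onD)
  have P2: "w x < w y" if x: "c < x" "x < c + d" "x \<le> t" and y: "c' \<le> y" "y \<le> c" for x y
  proof -
    have xin: "x \<in> {a<..c0}" using x sct by auto
    have "dist (H x) (H c) < e" using d x by (intro d(2)[OF xin]) (auto simp: dist_real_def)
    then have "H x < H c + e" by (simp add: dist_real_def abs_less_iff)
    then have "q * H x < q * (H c + e)" using q by simp
    then have qx: "q * H x < H c'" using ineq Hc' by linarith
    have mux: "a < mu x" "mu x < x" "H (mu x) < q * H x" using mu xin by auto
    have "mu x < c'"
    proof (rule ccontr)
      assume "\<not> mu x < c'"
      then have "H c' \<le> H (mu x)" using Hmono[of c' "mu x"] c' sct mux x by auto
      then show False using mux qx by linarith
    qed
    have "w x \<le> w c" using mx x sct by auto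
    moreover have "mu x \<le> c" "c < x" using \<open>mu x < c'\<close> c' x by auto
    ultimately have "\<not> (\<forall>t. mu x \<le> t \<longrightarrow> t < x \<longrightarrow> w t < w x)" by force
    then have "\<forall>t. mu x \<le> t \<longrightarrow> t < x \<longrightarrow> w x < w t" using typw[of x] xin by auto
    then show ?thesis using y \<open>mu x < c'\<close> x by auto
  qed
  have ge: "w c \<le> w y" if y: "c' \<le> y" "y \<le> c" for y
  proof (rule ccontr)
    assume "\<not> w c \<le> w y"
    then have pos: "w c - w y > 0" by simp
    obtain d2 where d2: "d2 > 0" "\<And>x. x \<in> {a<..c0} \<Longrightarrow> dist x c < d2 \<Longrightarrow> dist (w x) (w c) < w c - w y"
      using wc cin pos unfolding continuous_on_iff by metis
    define x where "x = c + min (min d d2) (t - c) / 2"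
    define mm where "mm = min (min d d2) (t - c)"
    have mm: "0 < mm" "mm \<le> d" "mm \<le> d2" "mm \<le> t - c" using d d2 sct by (auto simp: mm_def)
    have x: "c < x" "x < c + d" "x < c + d2" "x \<le> t" using mm unfolding x_def mm_def[symmetric] by linarith+
    have "dist (w x) (w c) < w c - w y" using x sct by (intro d2(2)) (auto simp: dist_real_def)
    then have "w x > w y" by (simp add: dist_real_def abs_less_iff)
    moreover have "w x < w y" using P2[OF x(1,2,4) y] .
    ultimately show False by simp
  qed
  have muc: "a < mu c" "mu c < c" using mu cin by auto
  define y0 where "y0 = max c' (mu c)"
  have y0: "c' \<le> y0" "y0 < c" "mu c \<le> y0" using c' muc by (auto simp: y0_def)
  have "w y0 \<le> w c" using mx y0 c' sct by auto
  moreover have "w c \<le> w y0" using ge y0 by auto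
  ultimately have "w y0 = w c" by simp
  then show False using typw[of c] cin y0 by force
qed

lemma w_inj:
  fixes w H mu :: "real \<Rightarrow> real" and a c0 q :: real
  assumes q: "0 < q" "q < 1"
    and Hc: "continuous_on {a<..c0} H" and Hm: "mono_on {a<..c0} H"
    and Hp: "\<And>t. a < t \<Longrightarrow> t \<le> c0 \<Longrightarrow> H t > 0"
    and wc: "continuous_on {a<..c0} w"
    and mu: "\<And>x. a < x \<Longrightarrow> x \<le> c0 \<Longrightarrow> a < mu x \<and> mu x < x \<and> H (mu x) < q * H x"
    and typw: "\<And>x. a < x \<Longrightarrow> x \<le> c0 \<Longrightarrow>
       (\<forall>t. mu x \<le> t \<longrightarrow> t < x \<longrightarrow> w t < w x) \<or> (\<forall>t. mu x \<le> t \<longrightarrow> t < x \<longrightarrow> w x < w t)"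
  shows "inj_on w {a<..c0}"
proof -
  note nm1 = nomax[OF q Hc Hm Hp wc mu typw]
  have wc': "continuous_on {a<..c0} (\<lambda>x. - w x)" using wc by (intro continuous_intros)
  have typw': "(\<forall>t. mu x \<le> t \<longrightarrow> t < x \<longrightarrow> - w t < - w x) \<or> (\<forall>t. mu x \<le> t \<longrightarrow> t < x \<longrightarrow> - w x < - w t)"
    if "a < x" "x \<le> c0" for x using typw[OF that] by auto
  note nm2 = nomax[OF q Hc Hm Hp wc' mu typw']
  have main: False if st: "a < s" "s < t" "t \<le> c0" and eq: "w s = w t" for s t
  proof -
    have cont: "continuous_on {s..t} w" using wc by (rule continuous_on_subset) (use st in auto)
    obtain c1 where c1: "c1 \<in> {s..t}" "\<forall>y\<in>{s..t}. w y \<le> w c1"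
      using continuous_attains_sup[OF compact_Icc _ cont] st by auto
    obtain c2 where c2: "c2 \<in> {s..t}" "\<forall>y\<in>{s..t}. w c2 \<le> w y"
      using continuous_attains_inf[OF compact_Icc _ cont] st by auto
    show False
    proof (cases "c1 = s \<or> c1 = t")
      case False
      then show ?thesis using nm1[of s c1 t] c1 st by auto
    next
      case T1: True
      show ?thesis
      proof (cases "c2 = s \<or> c2 = t")
        case False
        then show ?thesis using nm2[of s c2 t] c2 st by auto
      next
        case True
        have "w c1 = w s" "w c2 = w s" using T1 True eq by auto
        then have all: "\<forall>y\<in>{s..t}. w y = w s" using c1 c2 by force
        have mid: "s < (s+t)/2" "(s+t)/2 < t" using st by auto
        then have "(s+t)/2 \<in> {s..t}" by simp
        then have "w ((s+t)/2) = w s" using all by blast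
        then have "\<forall>y\<in>{s..t}. w y \<le> w ((s+t)/2)"
        proof (intro ballI)
          fix y assume "y \<in> {s..t}"
          then have "w y = w s" using all by blast
          then show "w y \<le> w ((s+t)/2)" using \<open>w ((s+t)/2) = w s\<close> by linarith
        qed
        then show ?thesis using nm1[of s "(s+t)/2" t] mid st by blast
      qed
    qed
  qed
  show ?thesis
  proof (rule inj_onI)
    fix s t assume "s \<in> {a<..c0}" "t \<in> {a<..c0}" "w s = w t"
    then show "s = t" using main[of s t] main[of t s] by (cases s t rule: linorder_cases) auto
  qed
qed

theorem theorem3:
  fixes a b :: real and h g :: "real \<Rightarrow> real" and L :: real
  assumes "a < b"
    and "continuous_on {a..<b} h" and "continuous_on {a..<b} g"
    and "mono_on {a..<b} h"
    and "\<forall>\<epsilon>>0. \<not> (\<exists>c. \<forall>t\<in>{a..<b}. t < a + \<epsilon> \<longrightarrow> h t = c)"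
    and "((\<lambda>x. (g x - g a) / (h x - h a)) \<longlongrightarrow> L) (at_right a)"
  shows "Limsup (at_right a) (\<lambda>x. ereal ((h (mu a b h g x) - h a) / (h x - h a)))
           \<ge> ereal (1 / exp 1)"
proof (rule ccontr)
  note ab = assms(1) and hc = assms(2) and gc = assms(3) and hm = assms(4)
    and nconst = assms(5) and lim = assms(6)
  assume "\<not> ?thesis"
  then have lt: "Limsup (at_right a) (\<lambda>x. ereal ((h (mu a b h g x) - h a) / (h x - h a))) < ereal (1 / exp 1)"
    by simp
  obtain z where z: "Limsup (at_right a) (\<lambda>x. ereal ((h (mu a b h g x) - h a) / (h x - h a))) < ereal z"
    "ereal z < ereal (1 / exp 1)" using ereal_dense2[OF lt] by blast
  have em: "exp (-1::real) = 1 / exp 1" by (simp add: exp_minus inverse_eq_divide)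
  define e1 where "e1 = exp (-1::real)"
  have e1: "e1 > 0" "z < e1" using z(2) em by (auto simp: e1_def)
  define q where "q = max z (e1 / 2)"
  have q0': "0 < q" "q < e1" "z \<le> q" using e1 by (auto simp: q_def max_def)
  have q0: "0 < q" "q < exp (-1)" "z \<le> q" using q0' by (auto simp: e1_def)
  have q1: "q < 1" using q0 by (smt (verit) exp_gt_zero exp_less_one_iff)
  have "eventually (\<lambda>x. ereal ((h (mu a b h g x) - h a) / (h x - h a)) < ereal z) (at_right a)"
    using Limsup_lessD[OF z(1)] .
  then obtain b1 where b1: "b1 > a" "\<And>x. x > a \<Longrightarrow> x < b1 \<Longrightarrow> (h (mu a b h g x) - h a) / (h x - h a) < z"
    unfolding eventually_at_right_field by auto
  define c0 where "c0 = min ((a + b1) / 2) ((a + b) / 2)"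
  have aux: "a < (a + b1) / 2" "(a + b1) / 2 < b1" "a < (a + b) / 2" "(a + b) / 2 < b"
    using b1 ab by auto
  have c0: "a < c0" "c0 < b1" "c0 < b" using aux unfolding c0_def
    by (auto simp: min_less_iff_disj)
  define H where "H t = h t - h a" for t
  define G where "G t = g t - g a" for t
  define v where "v t = G t / H t - L" for t
  define E where "E x = (\<lambda>t. (g x - g a) * h t - (h x - h a) * g t)" for x
  define Q where "Q x t = H t * (v x - v t)" for x t
  have hmono: "a \<le> s \<Longrightarrow> s \<le> t \<Longrightarrow> t < b \<Longrightarrow> h s \<le> h t" for s t
    using hm by (auto intro: mono_onD)
  have Hpos: "H t > 0" if "a < t" "t < b" for t
  proof (rule ccontr)
    assume "\<not> H t > 0"
    then have "h t \<le> h a" by (simp add: H_def)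
    have "\<forall>y\<in>{a..<b}. y < a + (t - a) \<longrightarrow> h y = h a"
    proof (intro ballI impI)
      fix y assume "y \<in> {a..<b}" "y < a + (t - a)"
      then have "h a \<le> h y" "h y \<le> h t" using hmono that by auto
      then show "h y = h a" using \<open>h t \<le> h a\<close> by simp
    qed
    moreover have tp: "t - a > 0" using that by simp
    ultimately show False using nconst by blast
  qed
  have Hmono: "a \<le> s \<Longrightarrow> s \<le> t \<Longrightarrow> t < b \<Longrightarrow> H s \<le> H t" for s t
    using hmono by (simp add: H_def)
  have Hcont: "continuous_on {a..<b} H" unfolding H_def using hc by (intro continuous_intros)
  have Gcont: "continuous_on {a..<b} G" unfolding G_def using gc by (intro continuous_intros)
  have vcont: "continuous_on {a<..<b} v" unfolding v_def
  proof (intro continuous_intros)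
    show "continuous_on {a<..<b} G" using Gcont by (rule continuous_on_subset) auto
    show "continuous_on {a<..<b} H" using Hcont by (rule continuous_on_subset) auto
    show "\<forall>x\<in>{a<..<b}. H x \<noteq> 0" using Hpos by force
  qed
  have EQ: "E x t = E x a + H x * Q x t" if "a < x" "x < b" "a < t" "t < b" for x t
  proof -
    have "H x \<noteq> 0" "H t \<noteq> 0" using Hpos that by force+
    then have 2: "H x * Q x t = G x * H t - H x * G t" unfolding Q_def v_def
      by (simp add: field_simps)
    have 1: "E x t = E x a + (G x * H t - H x * G t)" unfolding E_def G_def H_def
      by (simp add: algebra_simps)
    show ?thesis using 1 2 by simp
  qed
  have Ex: "E x x = E x a" for x unfolding E_def by (simp add: algebra_simps)
  have Econt: "continuous_on {a..<b} (E x)" for x unfolding E_def using hc gc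
    by (intro continuous_intros)
  have mufacts: "a < mu a b h g x \<and> mu a b h g x \<le> x \<and> inj_on (Q x) {mu a b h g x..x}
      \<and> continuous_on {mu a b h g x..x} (Q x)" if x: "a < x" "x < b" for x
  proof -
    define S where "S = {\<tau> \<in> {a<..x}. local_extremum_on {a..<b} (E x) \<tau>}"
    have muS: "mu a b h g x = Sup S" unfolding S_def mu_def E_def by simp
    have "\<exists>\<tau>. a < \<tau> \<and> \<tau> < x \<and> local_extremum_on {a..<b} (E x) \<tau>"
    proof (rule ccontr)
      assume "\<not> ?thesis"
      moreover have "continuous_on {a..x} (E x)" using Econt by (rule continuous_on_subset) (use x in auto)
      ultimately have "inj_on (E x) {a..x}"
        using noext_inj[of a a x b "E x"] x by auto
      then show False using inj_onD[of "E x" "{a..x}" a x] Ex x by auto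
    qed
    then obtain \<tau> where t0: "a < \<tau>" "\<tau> < x" "local_extremum_on {a..<b} (E x) \<tau>" by blast
    then have \<tau>: "\<tau> \<in> S" "a < \<tau>" unfolding S_def by auto
    have bdd: "bdd_above S" unfolding S_def by (rule bdd_aboveI[of _ x]) auto
    have ne: "S \<noteq> {}" using \<tau> by auto
    have m1: "a < mu a b h g x" using cSup_upper[OF \<tau>(1) bdd] \<tau> muS by simp
    have m2: "mu a b h g x \<le> x" unfolding muS by (rule cSup_least[OF ne]) (auto simp: S_def)
    have noext: "\<not> local_extremum_on {a..<b} (E x) t" if "mu a b h g x < t" "t < x" for t
    proof
      assume "local_extremum_on {a..<b} (E x) t"
      then have "t \<in> S" unfolding S_def using m1 that by auto
      then have "t \<le> mu a b h g x" using cSup_upper[OF _ bdd] muS by simp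
      then show False using that by simp
    qed
    have "continuous_on {mu a b h g x..x} (E x)" using Econt by (rule continuous_on_subset) (use x m1 in auto)
    then have injE: "inj_on (E x) {mu a b h g x..x}"
      using noext_inj[of a "mu a b h g x" x b "E x"] noext m1 x by auto
    have injQ: "inj_on (Q x) {mu a b h g x..x}"
    proof (rule inj_onI)
      fix s t assume st: "s \<in> {mu a b h g x..x}" "t \<in> {mu a b h g x..x}" "Q x s = Q x t"
      then have "E x s = E x t" using EQ[of x s] EQ[of x t] x m1 by auto
      then show "s = t" using inj_onD[OF injE] st by blast
    qed
    have cQ: "continuous_on {mu a b h g x..x} (Q x)" unfolding Q_def
    proof (intro continuous_intros)
      show "continuous_on {mu a b h g x..x} H" using Hcont by (rule continuous_on_subset) (use m1 x in auto)
      show "continuous_on {mu a b h g x..x} v" using vcont by (rule continuous_on_subset) (use m1 x in auto)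
    qed
    show ?thesis using m1 m2 injQ cQ by blast
  qed
  define mu' where "mu' x = mu a b h g x" for x
  have Qxx: "Q x x = 0" for x by (simp add: Q_def)
  have muq: "a < mu' x \<and> mu' x < x \<and> H (mu' x) < q * H x" if "a < x" "x \<le> c0" for x
  proof -
    have x: "a < x" "x < b" using that c0 by auto
    have Hx: "H x > 0" using Hpos x by simp
    have "H (mu' x) / H x < z" using b1(2)[of x] that c0 unfolding mu'_def H_def by auto
    then have "H (mu' x) < z * H x" using Hx by (simp add: field_simps)
    also have "\<dots> \<le> q * H x" using q0 Hx by (simp add: mult_right_mono)
    finally have hq: "H (mu' x) < q * H x" .
    have "mu' x \<noteq> x" using hq q1 Hx by (smt (verit) mult_less_cancel_right1)
    then show ?thesis using mufacts[OF x] hq unfolding mu'_def by auto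
  qed
  have typv: "(\<forall>t. mu' x \<le> t \<longrightarrow> t < x \<longrightarrow> v t < v x) \<or> (\<forall>t. mu' x \<le> t \<longrightarrow> t < x \<longrightarrow> v x < v t)"
    if "a < x" "x \<le> c0" for x
  proof -
    have x: "a < x" "x < b" using that c0 by auto
    note mf = mufacts[OF x, folded mu'_def]
    have "(\<forall>t. mu' x \<le> t \<longrightarrow> t < x \<longrightarrow> Q x t > 0) \<or> (\<forall>t. mu' x \<le> t \<longrightarrow> t < x \<longrightarrow> Q x t < 0)"
      using sign_const[of "mu' x" x "Q x"] mf Qxx by blast
    moreover have "H t > 0" if "mu' x \<le> t" "t < x" for t using Hpos that mf x by auto
    ultimately show ?thesis unfolding Q_def
      by (auto simp: zero_less_mult_iff mult_less_0_iff) (meson less_le_not_le)+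
  qed
  have HcontI: "continuous_on {a<..c0} H" using Hcont by (rule continuous_on_subset) (use c0 in auto)
  have HmI: "mono_on {a<..c0} H" using Hmono c0 by (auto intro!: mono_onI)
  have HpI: "\<And>t. a < t \<Longrightarrow> t \<le> c0 \<Longrightarrow> H t > 0" using Hpos c0 by auto
  have vcI: "continuous_on {a<..c0} v" using vcont by (rule continuous_on_subset) (use c0 in auto)
  have injv: "inj_on v {a<..c0}"
    using w_inj[OF q0(1) q1 HcontI HmI HpI vcI muq typv] .
  have mono_cases: "strict_mono_on {a<..c0} v \<or> strict_antimono_on {a<..c0} v"
    using injective_eq_monotone_map[of "{a<..c0}" v] injv vcI by (simp add: is_interval_oc)
  have v0: "(v \<longlongrightarrow> 0) (at_right a)"
  proof -
    have "((\<lambda>x. G x / H x - L) \<longlongrightarrow> L - L) (at_right a)"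
      using tendsto_diff[OF lim tendsto_const[of L]] unfolding G_def H_def .
    then show ?thesis unfolding v_def by simp
  qed
  have HcT: "continuous_on {a..c0} H" using Hcont by (rule continuous_on_subset) (use c0 in auto)
  have HmT: "mono_on {a..c0} H" using Hmono c0 by (auto intro!: mono_onI)
  have Ha: "H a = 0" by (simp add: H_def)
  have windowpos: "mu' x \<le> s" if "a < s" "x \<le> c0" "s \<le> x" "q * H x \<le> H s" for x s
  proof (rule ccontr)
    assume "\<not> mu' x \<le> s"
    then have "H s \<le> H (mu' x)" using Hmono[of s "mu' x"] that muq[of x] c0 by auto
    then show False using muq[of x] that by auto
  qed
  from mono_cases show False
  proof (elim disjE)
    assume sm: "strict_mono_on {a<..c0} v"
    have vm: "\<And>s t. a < s \<Longrightarrow> s < t \<Longrightarrow> t \<le> c0 \<Longrightarrow> v s < v t"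
      using sm by (auto intro: monotone_onD)
    show False
    proof (rule quant[OF c0(1) HcT Ha HmT HpI vm v0 q0(1,2)])
      fix x s t assume st: "a < s" "s \<le> t" "t \<le> x" "x \<le> c0" "q * H x \<le> H s"
      have x: "a < x" "x < b" using st c0 by auto
      note mf = mufacts[OF x, folded mu'_def]
      have "Q x t \<le> Q x s"
      proof (rule window_mono[of "mu' x" x "Q x"])
        show "continuous_on {mu' x..x} (Q x)" "inj_on (Q x) {mu' x..x}" "Q x x = 0"
          using mf Qxx by auto
        show "Q x t' > 0" if "mu' x \<le> t'" "t' < x" for t'
          using Hpos[of t'] vm[of t' x] that mf x st unfolding Q_def by auto
        show "mu' x \<le> s" using windowpos st by auto
      qed (use st in auto)
      then show "H t * (v x - v t) \<le> H s * (v x - v s)" unfolding Q_def .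
    qed
  next
    assume sm: "strict_antimono_on {a<..c0} v"
    define w where "w t = - v t" for t
    have vm: "\<And>s t. a < s \<Longrightarrow> s < t \<Longrightarrow> t \<le> c0 \<Longrightarrow> w s < w t"
    proof -
      fix s t assume "a < s" "s < t" "t \<le> c0"
      then have "v t < v s" using monotone_onD[OF sm, of s t] by auto
      then show "w s < w t" by (simp add: w_def)
    qed
    have w0: "(w \<longlongrightarrow> 0) (at_right a)" unfolding w_def using tendsto_minus[OF v0] by simp
    show False
    proof (rule quant[OF c0(1) HcT Ha HmT HpI vm w0 q0(1,2)])
      fix x s t assume st: "a < s" "s \<le> t" "t \<le> x" "x \<le> c0" "q * H x \<le> H s"
      have x: "a < x" "x < b" using st c0 by auto
      note mf = mufacts[OF x, folded mu'_def]
      have injm: "inj_on (\<lambda>t. - Q x t) {mu' x..x}" using mf by (auto simp: inj_on_def)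
      have cm: "continuous_on {mu' x..x} (\<lambda>t. - Q x t)" using mf by (intro continuous_intros) auto
      have "- Q x t \<le> - Q x s"
      proof (rule window_mono[of "mu' x" x "\<lambda>t. - Q x t", OF cm injm])
        show "- Q x x = 0" using Qxx by simp
        show "- Q x t' > 0" if "mu' x \<le> t'" "t' < x" for t'
          using Hpos[of t'] vm[of t' x] that mf x st unfolding Q_def w_def
          by (auto simp: mult_pos_neg)
        show "mu' x \<le> s" using windowpos st by auto
      qed (use st in auto)
      then show "H t * (w x - w t) \<le> H s * (w x - w s)" unfolding Q_def w_def
        by (simp add: algebra_simps)
    qed
  qed
qed

end
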